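(* Let $\mathcal{O}_K$ be a Henselian discrete valuation domain with field of fractions $K$ and algebraically closed residue field of characteristic $2$, with normalized valuation $v$. Let $u$ be an integer with $0<u<v(2)$. Then there exists an elliptic curve $E/K$ with good supersingular reduction such that $v(j(E))=12u$.
   Context: $v(0)=\infty$, so $v(2)=\infty$ when $\operatorname{char}K=2$. *)

theory Defs
  imports "HOL-Library.Extended_Real" "HOL-Computational_Algebra.Polynomial"
begin

text \<open>A normalized discrete valuation on a field K, with values in Z \<union> {\<infinity>}
  (v 0 = \<infinity>); the valuation ring O_K is {x. v x \<ge> 0}, its maximal ideal {x. v x > 0}.\<close>

definition discrete_valuation :: "('a::field \<Rightarrow> ereal) \<Rightarrow> bool" where
  "discrete_valuation v \<longleftrightarrow>
     (\<forall>x. v x = \<infinity> \<longleftrightarrow> x = 0) \<and>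
     (\<forall>x. x \<noteq> 0 \<longrightarrow> (\<exists>n::int. v x = ereal (of_int n))) \<and>
     (\<forall>x y. v (x * y) = v x + v y) \<and>
     (\<forall>x y. min (v x) (v y) \<le> v (x + y)) \<and>
     (\<exists>\<pi>. v \<pi> = 1)"

definition integral_poly :: "('a::field \<Rightarrow> ereal) \<Rightarrow> 'a poly \<Rightarrow> bool" where
  "integral_poly v p \<longleftrightarrow> (\<forall>i. v (coeff p i) \<ge> 0)"

definition henselian :: "('a::field \<Rightarrow> ereal) \<Rightarrow> bool" where
  "henselian v \<longleftrightarrow>
     (\<forall>p a. integral_poly v p \<and> lead_coeff p = 1 \<and> v a \<ge> 0 \<and>
        v (poly p a) > 0 \<and> v (poly (pderiv p) a) = 0 \<longrightarrow>
        (\<exists>b. poly p b = 0 \<and> v (b - a) > 0))"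

text \<open>The residue field O_K/m is algebraically closed: every monic polynomial of positive
  degree over O_K has a root modulo m (its reduction is monic of the same degree).\<close>
definition residue_field_alg_closed :: "('a::field \<Rightarrow> ereal) \<Rightarrow> bool" where
  "residue_field_alg_closed v \<longleftrightarrow>
     (\<forall>p. integral_poly v p \<and> lead_coeff p = 1 \<and> degree p \<ge> 1 \<longrightarrow>
        (\<exists>a. v a \<ge> 0 \<and> v (poly p a) > 0))"

record 'a weierstrass =
  wa1 :: 'a
  wa2 :: 'a
  wa3 :: 'a
  wa4 :: 'a
  wa6 :: 'a

definition w_b2 :: "'a::field weierstrass \<Rightarrow> 'a" where
  "w_b2 E = wa1 E ^ 2 + 4 * wa2 E"
definition w_b4 :: "'a::field weierstrass \<Rightarrow> 'a" where
  "w_b4 E = 2 * wa4 E + wa1 E * wa3 E"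
definition w_b6 :: "'a::field weierstrass \<Rightarrow> 'a" where
  "w_b6 E = wa3 E ^ 2 + 4 * wa6 E"
definition w_b8 :: "'a::field weierstrass \<Rightarrow> 'a" where
  "w_b8 E = wa1 E ^ 2 * wa6 E + 4 * wa2 E * wa6 E - wa1 E * wa3 E * wa4 E
            + wa2 E * wa3 E ^ 2 - wa4 E ^ 2"
definition w_c4 :: "'a::field weierstrass \<Rightarrow> 'a" where
  "w_c4 E = w_b2 E ^ 2 - 24 * w_b4 E"
definition w_disc :: "'a::field weierstrass \<Rightarrow> 'a" where
  "w_disc E = - (w_b2 E ^ 2 * w_b8 E) - 8 * w_b4 E ^ 3 - 27 * w_b6 E ^ 2
              + 9 * w_b2 E * w_b4 E * w_b6 E"
definition j_inv :: "'a::field weierstrass \<Rightarrow> 'a" where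
  "j_inv E = w_c4 E ^ 3 / w_disc E"

definition elliptic :: "'a::field weierstrass \<Rightarrow> bool" where
  "elliptic E \<longleftrightarrow> w_disc E \<noteq> 0"

text \<open>Change of variables x = u^2 x' + r, y = u^3 y' + s u^2 x' + t (Silverman, Table 3.1).\<close>
definition w_transform :: "'a::field weierstrass \<Rightarrow> 'a \<Rightarrow> 'a \<Rightarrow> 'a \<Rightarrow> 'a \<Rightarrow> 'a weierstrass" where
  "w_transform E u r s t =
    \<lparr> wa1 = (wa1 E + 2 * s) / u,
      wa2 = (wa2 E - s * wa1 E + 3 * r - s ^ 2) / u ^ 2,
      wa3 = (wa3 E + r * wa1 E + 2 * t) / u ^ 3,
      wa4 = (wa4 E - s * wa3 E + 2 * r * wa2 E - (t + r * s) * wa1 E + 3 * r ^ 2 - 2 * s * t) / u ^ 4,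
      wa6 = (wa6 E + r * wa4 E + r ^ 2 * wa2 E + r ^ 3 - t * wa3 E - t ^ 2 - r * t * wa1 E) / u ^ 6 \<rparr>"

definition w_isomorphic :: "'a::field weierstrass \<Rightarrow> 'a weierstrass \<Rightarrow> bool" where
  "w_isomorphic E E' \<longleftrightarrow> (\<exists>u r s t. u \<noteq> 0 \<and> E' = w_transform E u r s t)"

definition w_eqn :: "'a::field weierstrass \<Rightarrow> 'a \<Rightarrow> 'a \<Rightarrow> 'a" where
  "w_eqn E x y = y ^ 2 + wa1 E * x * y + wa3 E * y
                 - (x ^ 3 + wa2 E * x ^ 2 + wa4 E * x + wa6 E)"

definition good_reduction_model :: "('a::field \<Rightarrow> ereal) \<Rightarrow> 'a weierstrass \<Rightarrow> bool" where
  "good_reduction_model v E \<longleftrightarrow>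
     v (wa1 E) \<ge> 0 \<and> v (wa2 E) \<ge> 0 \<and> v (wa3 E) \<ge> 0 \<and> v (wa4 E) \<ge> 0 \<and> v (wa6 E) \<ge> 0 \<and>
     v (w_disc E) = 0"

text \<open>For a residue field k of characteristic 2 which is algebraically closed, the reduced
  curve is supersingular iff its 2-torsion over k (= its algebraic closure) is trivial, i.e.
  there is no affine point (x,y) of the reduction with P = -P, i.e. with 2y + a1 x + a3 = 0
  in k. Points of k are represented by elements of O_K modulo the maximal ideal.\<close>
definition reduction_2torsion_trivial :: "('a::field \<Rightarrow> ereal) \<Rightarrow> 'a weierstrass \<Rightarrow> bool" where
  "reduction_2torsion_trivial v E \<longleftrightarrow>
     \<not> (\<exists>x y. v x \<ge> 0 \<and> v y \<ge> 0 \<and> v (w_eqn E x y) > 0 \<and>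
              v (2 * y + wa1 E * x + wa3 E) > 0)"

definition good_supersingular_reduction :: "('a::field \<Rightarrow> ereal) \<Rightarrow> 'a weierstrass \<Rightarrow> bool" where
  "good_supersingular_reduction v E \<longleftrightarrow>
     (\<exists>E'. w_isomorphic E E' \<and> good_reduction_model v E' \<and> reduction_2torsion_trivial v E')"

end

theory Submission
  imports Defs
begin

lemma dv_mult: "discrete_valuation v \<Longrightarrow> v (x*y) = v x + v y"
  unfolding discrete_valuation_def by blast
lemma dv_add: "discrete_valuation v \<Longrightarrow> min (v x) (v y) \<le> v (x+y)"
  unfolding discrete_valuation_def by blast
lemma dv_inf: "discrete_valuation v \<Longrightarrow> v x = \<infinity> \<longleftrightarrow> x = 0"
  unfolding discrete_valuation_def by blast
lemma dv_fin: "discrete_valuation v \<Longrightarrow> x \<noteq> 0 \<Longrightarrow> \<exists>n::int. v x = ereal (of_int n)"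
  unfolding discrete_valuation_def by blast
lemma dv_pi: "discrete_valuation v \<Longrightarrow> \<exists>p. v p = 1"
  unfolding discrete_valuation_def by blast

lemma dv_one: assumes "discrete_valuation v" shows "v 1 = 0"
proof -
  obtain n::int where n: "v 1 = ereal n" using dv_fin[OF assms, of 1] by auto
  have "v (1*1) = v 1 + v 1" using dv_mult[OF assms] .
  then have "ereal n = ereal n + ereal n" using n by simp
  then show ?thesis using n by (simp add: zero_ereal_def)
qed

lemma dv_uminus: assumes "discrete_valuation v" shows "v (-x) = v x"
proof -
  obtain n::int where n: "v (-1) = ereal n" using dv_fin[OF assms, of "-1"] by auto
  have "v ((-1)*(-1)) = v (-1) + v (-1)" using dv_mult[OF assms] .
  then have "0 = ereal n + ereal n" using n dv_one[OF assms] by simp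
  then have "n = 0" by (simp add: zero_ereal_def)
  have "v (-x) = v ((-1) * x)" by simp
  also have "\<dots> = v (-1) + v x" using dv_mult[OF assms] by blast
  also have "\<dots> = v x" using n \<open>n = 0\<close> by (simp add: zero_ereal_def)
  finally show ?thesis .
qed

lemma dv_strict: assumes "discrete_valuation v" "v x < v y" shows "v (x+y) = v x"
proof -
  have 1: "v x \<le> v (x+y)" using dv_add[OF assms(1), of x y] assms(2) by simp
  have "min (v (x+y)) (v (-y)) \<le> v ((x+y) + (-y))" using dv_add[OF assms(1)] .
  then have "min (v (x+y)) (v y) \<le> v x" using dv_uminus[OF assms(1)] by simp
  then show ?thesis using 1 assms(2) by (auto simp: min_def split: if_splits)
qed

lemma dv_nat: assumes "discrete_valuation v" shows "v (of_nat n) \<ge> 0"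
proof (induction n)
  case 0 then show ?case using dv_inf[OF assms, of 0] by simp
next
  case (Suc n)
  have "min (v 1) (v (of_nat n)) \<le> v (1 + of_nat n)" using dv_add[OF assms] .
  then show ?case using Suc dv_one[OF assms] by simp
qed

lemma dv_pow: assumes "discrete_valuation v" "v p = 1" shows "v (p ^ n) = ereal (of_nat n)"
proof (induction n)
  case 0 then show ?case using dv_one[OF assms(1)] by (simp add: zero_ereal_def)
next
  case (Suc n) then show ?case using dv_mult[OF assms(1)] assms(2) by (simp add: one_ereal_def)
qed

theorem lemma2p12:
  fixes v :: "'K::field \<Rightarrow> ereal" and u :: int
  assumes "discrete_valuation v"
    and "henselian v"
    and "residue_field_alg_closed v"
    and "v 2 > 0"
    and "0 < u"
    and "ereal (of_int u) < v 2"
  shows "\<exists>E :: 'K weierstrass. elliptic E \<and> good_supersingular_reduction v E \<and>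
           v (j_inv E) = ereal (of_int (12 * u))"
proof -
  note dv = assms(1)
  obtain p where p: "v p = 1" using dv_pi[OF dv] by auto
  define a where "a = p ^ nat u"
  have va: "v a = ereal u" using dv_pow[OF dv p, of "nat u"] assms(5) a_def by simp
  have va3: "v (a^3) = ereal (3*u)"
    using dv_mult[OF dv, of a "a*a"] dv_mult[OF dv, of a a] va by (simp add: power3_eq_cube mult.assoc)
  have v1: "v 1 = 0" using dv_one[OF dv] .
  have v3: "v 3 = 0"
  proof -
    have "v (1 + 2) = v 1" using dv_strict[OF dv, of 1 2] v1 assms(4) by simp
    then show ?thesis using v1 by simp
  qed
  have v24: "v 24 = v 2 + v 2 + v 2"
  proof -
    have "(24::'K) = 2*2*2*3" by simp
    then have "v 24 = v (2*2*2*3)" by simp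
    also have "\<dots> = v 2 + v 2 + v 2 + v 3" using dv_mult[OF dv, of "2*2*2" 3] dv_mult[OF dv, of "2*2" 2] dv_mult[OF dv, of 2 2] by presburger
    finally show ?thesis using v3 by simp
  qed
  have lt24: "v (a^3) < v (-24)"
  proof -
    have "ereal (3*u) < v 2 + v 2 + v 2"
    proof (cases "v 2")
      case (real r) then show ?thesis using assms(6) by simp
    next
      case PInf then show ?thesis by simp
    next
      case MInf then show ?thesis using assms(4) by simp
    qed
    then show ?thesis using va3 v24 dv_uminus[OF dv] by simp
  qed
  have vc: "v (a^3 - 24) = ereal (3*u)"
    using dv_strict[OF dv lt24] va3 by simp
  have v27: "v (-27) = 0"
  proof -
    have "v (of_nat 13) \<ge> 0" using dv_nat[OF dv] .
    then have "v (13::'K) \<ge> 0" by simp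
    then have "v (2 * 13) > 0" using dv_mult[OF dv, of 2 13] assms(4)
      by (metis add_nonneg_pos add.commute) 
    then have "v (1 + 2*13) = v 1" using dv_strict[OF dv, of 1 "2*13"] v1 by simp
    moreover have "(1 + 2*13::'K) = 27" by simp
    ultimately show ?thesis using v1 dv_uminus[OF dv] by simp
  qed
  have vD: "v (-27 + a^3) = 0"
    using dv_strict[OF dv, of "-27" "a^3"] v27 va3 assms(5) by (simp add: zero_ereal_def)
  define E :: "'K weierstrass" where "E = \<lparr>wa1 = a, wa2 = 0, wa3 = 1, wa4 = 0, wa6 = 0\<rparr>"
  have disc: "w_disc E = -27 + a^3"
    unfolding E_def w_disc_def w_b2_def w_b4_def w_b6_def w_b8_def by (simp add: algebra_simps power3_eq_cube power2_eq_square)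
  have c4: "w_c4 E = a * (a^3 - 24)"
    unfolding E_def w_c4_def w_b2_def w_b4_def by (simp add: algebra_simps power3_eq_cube power2_eq_square)
  have vdisc: "v (w_disc E) = 0" using disc vD by simp
  have ell: "elliptic E" unfolding elliptic_def using vdisc dv_inf[OF dv, of "w_disc E"] by auto
  have vc4: "v (w_c4 E) = ereal (4*u)" using c4 dv_mult[OF dv] va vc by simp
  have vc43: "v (w_c4 E ^ 3) = ereal (12*u)"
    using dv_mult[OF dv, of "w_c4 E" "w_c4 E * w_c4 E"] dv_mult[OF dv, of "w_c4 E" "w_c4 E"] vc4
    by (simp add: power3_eq_cube mult.assoc)
  have vj: "v (j_inv E) = ereal (12*u)"
  proof -
    have ne: "w_disc E \<noteq> 0" using ell elliptic_def by blast
    have "v (w_c4 E ^ 3) = v (j_inv E * w_disc E)" unfolding j_inv_def using ne by simp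
    also have "\<dots> = v (j_inv E)" using dv_mult[OF dv] vdisc by simp
    finally show ?thesis using vc43 by simp
  qed
  have iso: "w_isomorphic E E"
    unfolding w_isomorphic_def
    by (rule exI[of _ 1], rule exI[of _ 0], rule exI[of _ 0], rule exI[of _ 0])
       (simp add: w_transform_def E_def)
  have good: "good_reduction_model v E"
    unfolding good_reduction_model_def using vdisc v1 dv_inf[OF dv, of 0] va assms(5)
    by (simp add: E_def)
  have tors: "reduction_2torsion_trivial v E"
    unfolding reduction_2torsion_trivial_def
  proof clarify
    fix x y assume x: "0 \<le> v x" and y: "0 \<le> v y" and h: "0 < v (2 * y + wa1 E * x + wa3 E)"
    have "v (2*y) > 0" using dv_mult[OF dv, of 2 y] assms(4) y by (metis add_pos_nonneg)
    moreover have "v (a*x) > 0" using dv_mult[OF dv, of a x] va assms(5) x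
      by (metis add_pos_nonneg ereal_less(2) of_int_0_less_iff)
    ultimately have "v (2*y + a*x) > 0" using dv_add[OF dv, of "2*y" "a*x"] by (meson less_le_trans min_less_iff_conj)
    then have "v (1 + (2*y + a*x)) = 0" using dv_strict[OF dv, of 1] v1 by simp
    moreover have "2 * y + wa1 E * x + wa3 E = 1 + (2*y + a*x)" by (simp add: E_def algebra_simps)
    ultimately show False using h by (metis less_irrefl)
  qed
  show ?thesis
    using ell vj iso good tors unfolding good_supersingular_reduction_def by blast
qed

end
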